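(* In any execution of $\mathcal{U}$, if some process executes line 6 for operation $o$ at time $T$ (that is, in that iteration it read from $S$ at line 5 a tuple whose time field is $t(o)$ and whose pointer field is $h(o)$), then $o$ is done at time $T$.
   Context: Model: an asynchronous shared-memory system with possibly infinitely many processes, any of which may crash, communicating via atomic shared objects. A fetch-and-increment (F\&I) object stores an integer; F\&I$(C)$ atomically returns the current value and increments it. A generalized-compare-and-swap (GCAS) object $O$ stores a value and supports Read$(O)$ and GCAS$(c, O, v_1, v_2)$, which atomically does: if $c(\text{current value of } O, v_1)$ holds then set $O := v_2$ and return true, else return false. Tuples are compared componentwise for $=$; GCAS$(>, A, (t,-,-), v)$ succeeds iff the time field of $A$ is strictly greater than $t$. Implemented type $\mathcal{T} = (OP, RES, Q, \delta)$ with initial state $s_0$; a procedure $apply_{\mathcal{T}}(o,s)$ returns some $(s',r)$ with $(s,o,s',r)\in\delta$. $NULL$ is a value different from every response of $\mathcal{T}$, and $NOOP$ is a name different from every operation of $\mathcal{T}$. Algorithm $\mathcal{U}$: each process $p$ owns a GCAS object $H_p$ with fields $(time, response)$. Shared objects: F\&I object $C$, initially $1$; GCAS object $A$ with fields $(time, op, ptr)$, initially $(0, NOOP, h(NOOP))$, where $h(NOOP)$ is a pointer to an immutable location containing $(0,\perp)$; GCAS object $S$ with fields $(time, state, response, ptr)$, initially $(0, s_0, \perp, h(NOOP))$. Process $p$ performs operation $o$ by calling DoOp$(o)$: (1) DoOp$(o)$ invoked; (2) $t := $ F\&I$(C)$; (3) $H_p := (t, NULL)$; (4) while $H_p = (t,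 NULL)$ do: (5) $(t^*, s^*, r^*, roptr^* ) := S$; (6) GCAS$(=, *roptr^*, (t^*, NULL), (t^*, r^* ))$; (7) GCAS$(>, A, (t,-,-), (t, o, \&H_p))$; (8) $(t', o', roptr') := A$; (9) $(\hat t, \hat r) := *roptr'$; (10) if $(\hat t,\hat r) = (t', NULL)$ then (11) $(s', r') := apply_{\mathcal{T}}(o', s^* )$; (12) GCAS$(=, S, (t^*,s^*,r^*,roptr^* ), (t', s', r', roptr'))$; (13) else GCAS$(=, A, (t', o', roptr'), (t, o, \&H_p))$; end while; (14) return $H_p.response$. Notation: an "operation" $o$ means one invocation of DoOp$(o)$ (or the initial $NOOP$). $p(o)$ is the process executing it; $t(o)$ is the value returned by its F\&I at line 2, or $\infty$ if line 2 has not been executed; $h(o)$ is $H_{p(o)}$. For $NOOP$: $t(NOOP)=0$ and $h(NOOP)$ is the immutable location containing $(0,\perp)$. Operation $o$ is done at time $T$ if at some time $T'\le T$, $h(o) = (t(o), r)$ with $r \neq NULL$. "Operation $o$ is stored in $S$" means $S = (t(o), -, r, h(o))$ for some $r$; "line 12 is executed for $o$" means the new value written in that GCAS has time field $t(o)$ and pointer field $h(o)$. *)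

theory Defs
  imports Main
begin

text \<open>Processes have type 'p (possibly infinitely many),
operations of the implemented type have type 'o, states 's, responses 'r.
The transition relation delta of the type is a set of tuples (s, o, s', r).\<close>

datatype 'r rv = Null | Bot | Res 'r
datatype 'o opv = Noop | Op 'o
datatype 'p ptr = HNoop | HProc 'p      \<comment> \<open>h(NOOP) and &H_p\<close>

type_synonym ('p,'s,'r) stup = "nat \<times> 's \<times> 'r rv \<times> 'p ptr"
type_synonym ('p,'o) atup = "nat \<times> 'o opv \<times> 'p ptr"

text \<open>Local control state of a process (program counter + local variables).
Lx means: the next step of the process executes line x.
Local computations (line 10 test, line 11 apply) are merged into the
adjacent shared-memory step.\<close>
datatype ('p,'o,'s,'r) pcs =
    Idle
  | L2 'o
  | L3 'o nat
  | L4 'o nat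
  | L5 'o nat
  | L6 'o nat "('p,'s,'r) stup"
  | L7 'o nat "('p,'s,'r) stup"
  | L8 'o nat "('p,'s,'r) stup"
  | L9 'o nat "('p,'s,'r) stup" "('p,'o) atup"
  | L12 'o nat "('p,'s,'r) stup" "('p,'o) atup"
  | L13 'o nat "('p,'s,'r) stup" "('p,'o) atup"
  | L14 'o nat

record ('p,'o,'s,'r) conf =
  Cv :: nat
  Av :: "('p,'o) atup"
  Sv :: "('p,'s,'r) stup"
  Hv :: "'p \<Rightarrow> nat \<times> 'r rv"
  pcv :: "'p \<Rightarrow> ('p,'o,'s,'r) pcs"

definition deref :: "('p,'o,'s,'r) conf \<Rightarrow> 'p ptr \<Rightarrow> nat \<times> 'r rv" where
  "deref c q = (case q of HNoop \<Rightarrow> (0, Bot) | HProc p \<Rightarrow> Hv c p)"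

definition gcas_ptr :: "('p \<Rightarrow> nat \<times> 'r rv) \<Rightarrow> 'p ptr \<Rightarrow> nat \<times> 'r rv \<Rightarrow> nat \<times> 'r rv
                        \<Rightarrow> ('p \<Rightarrow> nat \<times> 'r rv)" where
  "gcas_ptr H q old new = (case q of HNoop \<Rightarrow> H
      | HProc p \<Rightarrow> (if H p = old then H(p := new) else H))"

inductive step :: "('s \<times> 'o \<times> 's \<times> 'r) set \<Rightarrow> 'p \<Rightarrow> ('p,'o,'s,'r) conf \<Rightarrow> ('p,'o,'s,'r) conf \<Rightarrow> bool"
  for \<delta> :: "('s \<times> 'o \<times> 's \<times> 'r) set" where
  l1: "pcv c p = Idle \<Longrightarrow> step \<delta> p c (c\<lparr>pcv := (pcv c)(p := L2 oo)\<rparr>)"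
| l2: "pcv c p = L2 oo \<Longrightarrow>
     step \<delta> p c (c\<lparr>Cv := Cv c + 1, pcv := (pcv c)(p := L3 oo (Cv c))\<rparr>)"
| l3: "pcv c p = L3 oo t \<Longrightarrow>
     step \<delta> p c (c\<lparr>Hv := (Hv c)(p := (t, Null)), pcv := (pcv c)(p := L4 oo t)\<rparr>)"
| l4: "pcv c p = L4 oo t \<Longrightarrow>
     step \<delta> p c (c\<lparr>pcv := (pcv c)(p := (if Hv c p = (t, Null) then L5 oo t else L14 oo t))\<rparr>)"
| l5: "pcv c p = L5 oo t \<Longrightarrow>
     step \<delta> p c (c\<lparr>pcv := (pcv c)(p := L6 oo t (Sv c))\<rparr>)"
| l6: "pcv c p = L6 oo t (ts, ss, rs, ps) \<Longrightarrow>
     step \<delta> p c (c\<lparr>Hv := gcas_ptr (Hv c) ps (ts, Null) (ts, rs),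
                   pcv := (pcv c)(p := L7 oo t (ts, ss, rs, ps))\<rparr>)"
| l7: "pcv c p = L7 oo t st \<Longrightarrow>
     step \<delta> p c (c\<lparr>Av := (if fst (Av c) > t then (t, Op oo, HProc p) else Av c),
                   pcv := (pcv c)(p := L8 oo t st)\<rparr>)"
| l8: "pcv c p = L8 oo t st \<Longrightarrow>
     step \<delta> p c (c\<lparr>pcv := (pcv c)(p := L9 oo t st (Av c))\<rparr>)"
| l9_10: "pcv c p = L9 oo t st (ta, oa, pa) \<Longrightarrow>
     step \<delta> p c (c\<lparr>pcv := (pcv c)(p := (if deref c pa = (ta, Null)
                                     then L12 oo t st (ta, oa, pa)
                                     else L13 oo t st (ta, oa, pa)))\<rparr>)"
| l11_12: "pcv c p = L12 oo t (ts, ss, rs, ps) (ta, Op x, pa) \<Longrightarrow> (ss, x, s', r') \<in> \<delta> \<Longrightarrow>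
     step \<delta> p c (c\<lparr>Sv := (if Sv c = (ts, ss, rs, ps) then (ta, s', Res r', pa) else Sv c),
                   pcv := (pcv c)(p := L4 oo t)\<rparr>)"
| l13: "pcv c p = L13 oo t st aa \<Longrightarrow>
     step \<delta> p c (c\<lparr>Av := (if Av c = aa then (t, Op oo, HProc p) else Av c),
                   pcv := (pcv c)(p := L4 oo t)\<rparr>)"
| l14: "pcv c p = L14 oo t \<Longrightarrow>
     step \<delta> p c (c\<lparr>pcv := (pcv c)(p := Idle)\<rparr>)"

text \<open>Initial configuration (initial contents of the H_p are left arbitrary).\<close>
definition initial :: "'s \<Rightarrow> ('p,'o,'s,'r) conf \<Rightarrow> bool" where
  "initial s0 c \<longleftrightarrow> Cv c = 1 \<and> Av c = (0, Noop, HNoop) \<and> Sv c = (0, s0, Bot, HNoop)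
                     \<and> (\<forall>p. pcv c p = Idle)"

text \<open>A (finite) execution with n steps: configurations c 0 .. c n; step i is taken by
process who i and leads from c i to c (Suc i). Crashed processes simply take no more steps.\<close>
definition execution :: "('s \<times> 'o \<times> 's \<times> 'r) set \<Rightarrow> 's \<Rightarrow> (nat \<Rightarrow> ('p,'o,'s,'r) conf)
                         \<Rightarrow> (nat \<Rightarrow> 'p) \<Rightarrow> nat \<Rightarrow> bool" where
  "execution \<delta> s0 c who n \<longleftrightarrow> initial s0 (c 0) \<and> (\<forall>i<n. step \<delta> (who i) (c i) (c (Suc i)))"

text \<open>Operations: the initial NOOP, or an invocation of process p that obtained
ticket t from its F&I at line 2 (such invocations are uniquely identified by (p,t)).\<close>
datatype 'p operation = NoopOp | Inv 'p nat

primrec t_of :: "'p operation \<Rightarrow> nat" where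
  "t_of NoopOp = 0" | "t_of (Inv p t) = t"

primrec h_of :: "'p operation \<Rightarrow> 'p ptr" where
  "h_of NoopOp = HNoop" | "h_of (Inv p t) = HProc p"

definition is_operation :: "(nat \<Rightarrow> ('p,'o,'s,'r) conf) \<Rightarrow> (nat \<Rightarrow> 'p) \<Rightarrow> nat \<Rightarrow> 'p operation \<Rightarrow> bool" where
  "is_operation c who n op \<longleftrightarrow> (case op of NoopOp \<Rightarrow> True
     | Inv p t \<Rightarrow> (\<exists>i<n. who i = p \<and> (\<exists>oo. pcv (c i) p = L2 oo) \<and> Cv (c i) = t))"

definition done_at :: "(nat \<Rightarrow> ('p,'o,'s,'r) conf) \<Rightarrow> 'p operation \<Rightarrow> nat \<Rightarrow> bool" where
  "done_at c op T \<longleftrightarrow> (\<exists>T'\<le>T. \<exists>r. deref (c T') (h_of op) = (t_of op, r) \<and> r \<noteq> Null)"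

definition line6_for :: "(nat \<Rightarrow> ('p,'o,'s,'r) conf) \<Rightarrow> (nat \<Rightarrow> 'p) \<Rightarrow> nat \<Rightarrow> 'p operation \<Rightarrow> nat \<Rightarrow> bool" where
  "line6_for c who n op T \<longleftrightarrow> T < n \<and>
     (\<exists>oo t s r. pcv (c T) (who T) = L6 oo t (t_of op, s, r, h_of op))"

end

theory Submission
  imports Defs
begin

fun actt :: "('p,'o,'s,'r) pcs \<Rightarrow> nat option" where
  "actt (L4 oo t) = Some t"
| "actt (L5 oo t) = Some t"
| "actt (L6 oo t st) = Some t"
| "actt (L7 oo t st) = Some t"
| "actt (L8 oo t st) = Some t"
| "actt (L9 oo t st aa) = Some t"
| "actt (L12 oo t st aa) = Some t"
| "actt (L13 oo t st aa) = Some t"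
| "actt _ = None"

definition ent :: "('p,'o,'s,'r) conf \<Rightarrow> nat \<Rightarrow> 'p \<Rightarrow> bool" where
  "ent c ta q \<longleftrightarrow> (fst (Av c) = ta \<and> snd (snd (Av c)) = HProc q)
     \<or> (fst (Sv c) = ta \<and> snd (snd (snd (Sv c))) = HProc q)
     \<or> (\<exists>r oo t s rs. pcv c r = L6 oo t (ta, s, rs, HProc q))
     \<or> (\<exists>r oo t st oa. pcv c r = L9 oo t st (ta, oa, HProc q))
     \<or> (\<exists>r oo t st oa. pcv c r = L12 oo t st (ta, oa, HProc q))"

definition Inv1 :: "('p,'o,'s,'r) conf \<Rightarrow> bool" where
  "Inv1 c \<longleftrightarrow> fst (snd (snd (Sv c))) \<noteq> Null
     \<and> (\<forall>r oo t ts s rs ps. pcv c r = L6 oo t (ts, s, rs, ps) \<longrightarrow> rs \<noteq> Null)"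

definition InvH :: "('p,'o,'s,'r) conf \<Rightarrow> bool" where
  "InvH c \<longleftrightarrow> (\<forall>q t. actt (pcv c q) = Some t \<longrightarrow> fst (Hv c q) = t)"

definition J :: "('p \<Rightarrow> nat \<Rightarrow> bool) \<Rightarrow> ('p,'o,'s,'r) conf \<Rightarrow> bool" where
  "J D c \<longleftrightarrow> (\<forall>ta q. ent c ta q \<longrightarrow> D q ta \<or> (Hv c q = (ta, Null) \<and> actt (pcv c q) = Some ta))"

lemma gcas_cases:
  "gcas_ptr H ps old new q = H q \<or> (ps = HProc q \<and> H q = old \<and> gcas_ptr H ps old new q = new)"
  by (auto simp: gcas_ptr_def split: ptr.splits)

lemma inv1_step:
  assumes "step \<delta> p c c'" "Inv1 c" shows "Inv1 c'"
  using assms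
proof cases
  case (l5 oo t) then show ?thesis using assms(2) by (auto simp: Inv1_def)
next
  case (l11_12 oo t ts ss rs ps ta x pa s' r') then show ?thesis using assms(2) by (auto simp: Inv1_def)
qed (use assms(2) in \<open>auto simp: Inv1_def split: if_splits\<close>)

lemma invH_step:
  assumes "step \<delta> p c c'" "InvH c" shows "InvH c'"
  using assms
proof cases
  case (l6 oo t ts ss rs ps)
  show ?thesis unfolding InvH_def
  proof (intro allI impI)
    fix q t' assume a: "actt (pcv c' q) = Some t'"
    have "actt (pcv c q) = Some t'" using a l6 by (auto split: if_splits)
    then have "fst (Hv c q) = t'" using assms(2) by (auto simp: InvH_def)
    then show "fst (Hv c' q) = t'" using l6 gcas_cases[of "Hv c" ps "(ts, Null)" "(ts, rs)" q] by auto
  qed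
qed (use assms(2) in \<open>auto simp: InvH_def split: if_splits\<close>)


lemma ent_step:
  assumes st: "step \<delta> p c c'" and e: "ent c' ta q"
  shows "ent c ta q \<or> (q = p \<and> (\<exists>oo st. pcv c p = L7 oo ta st \<or> (\<exists>aa. pcv c p = L13 oo ta st aa)))"
  using st
proof cases
  case (l1 oo)
  then show ?thesis using e unfolding ent_def by (auto split: if_splits)
next
  case (l2 oo)
  then show ?thesis using e unfolding ent_def by (auto split: if_splits)
next
  case (l3 oo t)
  then show ?thesis using e unfolding ent_def by (auto split: if_splits)
next
  case (l4 oo t)
  then show ?thesis using e unfolding ent_def by (auto split: if_splits)
next
  case (l5 oo t)
  then show ?thesis using e unfolding ent_def by (auto split: if_splits; metis prod.collapse)
next
  case (l6 oo t ts ss rs ps)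
  then show ?thesis using e unfolding ent_def by (auto split: if_splits)
next
  case (l7 oo t st)
  show ?thesis
  proof (cases "t < fst (Av c) \<and> ta = t \<and> q = p")
    case True then show ?thesis using l7 by blast
  next
    case False then show ?thesis using e l7 unfolding ent_def by (auto split: if_splits)
  qed
next
  case (l8 oo t st)
  then show ?thesis using e unfolding ent_def by (auto split: if_splits; metis prod.collapse)
next
  case (l9_10 oo t st ta' oa pa)
  then show ?thesis using e unfolding ent_def by (auto split: if_splits)
next
  case (l11_12 oo t ts ss rs ps ta' x pa s' r')
  then show ?thesis using e unfolding ent_def by (auto split: if_splits)
next
  case (l13 oo t st aa)
  show ?thesis
  proof (cases "Av c = aa \<and> ta = t \<and> q = p")
    case True then show ?thesis using l13 by blast
  next
    case False then show ?thesis using e l13 unfolding ent_def by (auto split: if_splits)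
  qed
next
  case (l14 oo t)
  then show ?thesis using e unfolding ent_def by (auto split: if_splits)
qed

lemma act_step:
  assumes st: "step \<delta> p c c'" and i1: "Inv1 c"
    and a: "Hv c q = (ta, Null)" "actt (pcv c q) = Some ta"
    and nxt: "\<And>q t r. Hv c' q = (t, r) \<Longrightarrow> r \<noteq> Null \<Longrightarrow> D' q t"
  shows "D' q ta \<or> (Hv c' q = (ta, Null) \<and> actt (pcv c' q) = Some ta)"
  using st
proof cases
  case (l6 oo t ts ss rs ps)
  have rs: "rs \<noteq> Null" using i1 l6 unfolding Inv1_def by blast
  have act': "actt (pcv c' q) = Some ta" using l6 a by auto
  show ?thesis
  proof (cases "Hv c' q = Hv c q")
    case True then show ?thesis using a act' by auto
  next
    case False
    then have "ps = HProc q \<and> Hv c q = (ts, Null) \<and> Hv c' q = (ts, rs)"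
      using gcas_cases[of "Hv c" ps "(ts, Null)" "(ts, rs)" q] l6 by auto
    then show ?thesis using nxt[of q ts rs] rs a by auto
  qed
qed (use a in \<open>auto split: if_splits\<close>)

lemma J_step:
  assumes st: "step \<delta> p c c'" and i1: "Inv1 c" and ih: "InvH c" and j: "J D c"
    and mono: "\<And>q t. D q t \<Longrightarrow> D' q t"
    and cur: "\<And>q t r. Hv c q = (t, r) \<Longrightarrow> r \<noteq> Null \<Longrightarrow> D' q t"
    and nxt: "\<And>q t r. Hv c' q = (t, r) \<Longrightarrow> r \<noteq> Null \<Longrightarrow> D' q t"
  shows "J D' c'"
  unfolding J_def
proof (intro allI impI)
  fix ta q assume e: "ent c' ta q"
  show "D' q ta \<or> (Hv c' q = (ta, Null) \<and> actt (pcv c' q) = Some ta)"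
  proof (cases "ent c ta q")
    case True
    then have "D q ta \<or> (Hv c q = (ta, Null) \<and> actt (pcv c q) = Some ta)"
      using j unfolding J_def by blast
    then show ?thesis using act_step[OF st i1, of q ta D'] nxt mono by blast
  next
    case False
    then obtain oo st0 where q: "q = p" and pc: "pcv c p = L7 oo ta st0 \<or> (\<exists>aa. pcv c p = L13 oo ta st0 aa)"
      using ent_step[OF st e] by blast
    have act: "actt (pcv c p) = Some ta" using pc by auto
    then have f: "fst (Hv c p) = ta" using ih by (auto simp: InvH_def)
    have hv: "Hv c' p = Hv c p" and act': "actt (pcv c' p) = Some ta"
      using st pc by (cases rule: step.cases; auto)+
    show ?thesis
    proof (cases "snd (Hv c p) = Null")
      case True then show ?thesis using f hv act' q by (metis prod.collapse)
    next
      case False then show ?thesis using cur[of p ta "snd (Hv c p)"] f q by (metis prod.collapse)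
    qed
  qed
qed


definition Dh :: "(nat \<Rightarrow> ('p,'o,'s,'r) conf) \<Rightarrow> nat \<Rightarrow> 'p \<Rightarrow> nat \<Rightarrow> bool" where
  "Dh c k q t \<longleftrightarrow> (\<exists>k'\<le>k. \<exists>r. Hv (c k') q = (t, r) \<and> r \<noteq> Null)"

lemma reach:
  assumes ex: "execution \<delta> s0 c who n"
  shows "k \<le> n \<Longrightarrow> Inv1 (c k) \<and> InvH (c k) \<and> J (Dh c k) (c k)"
proof (induction k)
  case 0
  have ini: "initial s0 (c 0)" using ex by (simp add: execution_def)
  then show ?case
    by (auto simp: initial_def Inv1_def InvH_def J_def ent_def)
next
  case (Suc k)
  then have IH: "Inv1 (c k)" "InvH (c k)" "J (Dh c k) (c k)" by auto
  have st: "step \<delta> (who k) (c k) (c (Suc k))" using ex Suc.prems by (simp add: execution_def)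
  have "J (Dh c (Suc k)) (c (Suc k))"
  proof (rule J_step[OF st IH])
    show "\<And>q t. Dh c k q t \<Longrightarrow> Dh c (Suc k) q t" unfolding Dh_def using le_SucI by blast
    show "\<And>q t r. Hv (c k) q = (t, r) \<Longrightarrow> r \<noteq> Null \<Longrightarrow> Dh c (Suc k) q t"
      unfolding Dh_def using le_SucI by blast
    show "\<And>q t r. Hv (c (Suc k)) q = (t, r) \<Longrightarrow> r \<noteq> Null \<Longrightarrow> Dh c (Suc k) q t"
      unfolding Dh_def by blast
  qed
  then show ?case using inv1_step[OF st IH(1)] invH_step[OF st IH(2)] by blast
qed

lemma step_L6:
  assumes "step \<delta> p c c'" "pcv c p = L6 oo t (ts, s, rs, ps)"
  shows "Hv c' = gcas_ptr (Hv c) ps (ts, Null) (ts, rs)"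
  using assms by (cases rule: step.cases) auto

theorem mainTheorem6:
  fixes \<delta> :: "('s \<times> 'o \<times> 's \<times> 'r) set" and s0 :: 's
    and c :: "nat \<Rightarrow> ('p,'o,'s,'r) conf" and who :: "nat \<Rightarrow> 'p" and n T :: nat
    and op :: "'p operation"
  assumes "execution \<delta> s0 c who n"
    and "is_operation c who n op"
    and "line6_for c who n op T"
  shows "done_at c op (Suc T)"
proof (cases op)
  case NoopOp
  then show ?thesis unfolding done_at_def deref_def by auto
next
  case (Inv p t)
  obtain oo t0 s r where pc: "pcv (c T) (who T) = L6 oo t0 (t, s, r, HProc p)" and Tn: "T < n"
    using assms(3) Inv unfolding line6_for_def by auto
  have I: "Inv1 (c T)" "J (Dh c T) (c T)" using reach[OF assms(1), of T] Tn by auto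
  have rn: "r \<noteq> Null" using I(1) pc unfolding Inv1_def by blast
  have "ent (c T) t p" using pc unfolding ent_def by blast
  then have d: "Dh c T p t \<or> Hv (c T) p = (t, Null)" using I(2) unfolding J_def by blast
  have st: "step \<delta> (who T) (c T) (c (Suc T))" using assms(1) Tn by (simp add: execution_def)
  have hv: "Hv (c (Suc T)) = gcas_ptr (Hv (c T)) (HProc p) (t, Null) (t, r)"
    using step_L6[OF st pc] .
  show ?thesis
  proof (cases "Dh c T p t")
    case True
    then show ?thesis unfolding done_at_def Dh_def deref_def Inv by (simp; meson le_SucI)
  next
    case False
    then have "Hv (c T) p = (t, Null)" using d by blast
    then have "Hv (c (Suc T)) p = (t, r)" using hv by (simp add: gcas_ptr_def)
    then show ?thesis unfolding done_at_def deref_def Inv using rn by auto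
  qed
qed

end
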